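(* Let $K\ge 2$, let $(n_1,\dots,n_K)$ be positive integers, and let $i,j\in\{1,\dots,K\}$ be indices with $n_i<n_j$. Let $\tau$ be the time of the first emptying event and let $p\in\{1,\dots,K\}$ be the (random) type that is emptied at time $\tau$. Then for every $t$, \[ \Pr[p=i \text{ and } \tau\le t]\ \ge\ \Pr[p=j \text{ and } \tau\le t]. \]
   Context: Initial stocks $\vec n^{(0)}=(n_1,\dots,n_K)$ of $K$ goodie types evolve as follows: at each step $t=1,2,\dots$, as long as at least two coordinates of $\vec n^{(t-1)}$ are nonzero, an index $i$ is chosen uniformly at random (independently of the past) among the indices with $n_i^{(t-1)}>0$, and $\vec n^{(t)}=\vec n^{(t-1)}-\vec e_i$ ($\vec e_i$ the $i$-th standard unit vector). The time of the first emptying event is $\tau=\min\{t : \exists i \text{ with } n_i^{(t)}=0 \text{ and } n_i^{(0)}>0\}$; exactly one type is emptied at that step, and $p$ denotes that type. *)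

theory Defs
  imports "HOL-Probability.Probability"
begin

text \<open>Stocks are a list ns of length K (types indexed 0..K-1).
  One step: pick uniformly an index k among those with positive stock, decrement it.
  first_emptying ns is the joint law of (p, tau): the type emptied first and the
  step at which this happens. (Only meaningful when all entries of ns are positive,
  which is the situation of the theorem; then until tau all stocks stay positive.)\<close>

definition pos_idx :: "nat list \<Rightarrow> nat set" where
  "pos_idx ns = {k. k < length ns \<and> 0 < ns ! k}"

function first_emptying :: "nat list \<Rightarrow> (nat \<times> nat) pmf" where
  "first_emptying ns =
     (if pos_idx ns = {} then return_pmf (0, 0)
      else bind_pmf (pmf_of_set (pos_idx ns)) (\<lambda>k.
        if ns ! k = 1 then return_pmf (k, 1)
        else map_pmf (\<lambda>(p, tau). (p, Suc tau)) (first_emptying (ns[k := ns ! k - 1]))))"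
  by auto
termination
proof (relation "Wellfounded.measure sum_list")
  show "wf (Wellfounded.measure sum_list)" by simp
next
  fix ns :: "nat list" and k
  assume ne: "pos_idx ns \<noteq> {}" and k: "k \<in> set_pmf (pmf_of_set (pos_idx ns))"
  have fin: "finite (pos_idx ns)" unfolding pos_idx_def by simp
  from k ne fin have "k < length ns" "0 < ns ! k" by (auto simp: pos_idx_def)
  then show "(ns[k := ns ! k - 1], ns) \<in> Wellfounded.measure sum_list"
  proof -
    have "ns ! k \<le> sum_list ns" using \<open>k < length ns\<close> by (simp add: elem_le_sum_list)
    then show ?thesis using \<open>k < length ns\<close> \<open>0 < ns ! k\<close> by (simp add: sum_list_update)
  qed
qed

end

theory Submission imports Defs begin
lemma prob_bind_pmf_of_set:
  assumes "finite S" "S \<noteq> {}"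
  shows "measure_pmf.prob (bind_pmf (pmf_of_set S) N) A = (\<Sum>k\<in>S. measure_pmf.prob (N k) A) / card S"
proof -
  have "ennreal (measure_pmf.prob (bind_pmf (pmf_of_set S) N) A) = emeasure (bind_pmf (pmf_of_set S) N) A"
    by (simp add: measure_pmf.emeasure_eq_measure)
  also have "\<dots> = (\<Sum>k\<in>S. emeasure (N k) A) / card S"
    using assms by (simp add: nn_integral_pmf_of_set)
  also have "\<dots> = (\<Sum>k\<in>S. ennreal (measure_pmf.prob (N k) A)) / of_nat (card S)"
    by (simp add: measure_pmf.emeasure_eq_measure)
  also have "\<dots> = ennreal ((\<Sum>k\<in>S. measure_pmf.prob (N k) A) / card S)"
    using assms by (simp add: sum_ennreal divide_ennreal card_gt_0_iff ennreal_of_nat_eq_real_of_nat sum_nonneg)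
  finally show ?thesis by (simp add: divide_nonneg_nonneg sum_nonneg)
qed
definition F :: "nat list \<Rightarrow> nat \<Rightarrow> nat \<Rightarrow> real" where
  "F ns i t = measure_pmf.prob (first_emptying ns) {(p, tau). p = i \<and> tau \<le> t}"

definition G :: "nat list \<Rightarrow> nat \<Rightarrow> nat \<Rightarrow> nat \<Rightarrow> real" where
  "G ns i t k = (if ns ! k = 1 then (if k = i \<and> 1 \<le> t then 1 else 0)
     else (if t = 0 then 0 else F (ns[k := ns ! k - 1]) i (t - 1)))"

lemma pos_idx_all: "\<forall>k<length ns. 0 < ns ! k \<Longrightarrow> pos_idx ns = {..<length ns}"
  by (auto simp: pos_idx_def)

lemma F_rec:
  assumes pos: "\<forall>k<length ns. 0 < ns ! k" and ne: "ns \<noteq> []"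
  shows "F ns i t = (\<Sum>k<length ns. G ns i t k) / length ns"
proof -
  have P: "pos_idx ns = {..<length ns}" using pos by (rule pos_idx_all)
  have ne': "{..<length ns} \<noteq> {}" using ne by auto
  have "F ns i t = measure_pmf.prob (bind_pmf (pmf_of_set {..<length ns}) (\<lambda>k.
        if ns ! k = 1 then return_pmf (k, 1)
        else map_pmf (\<lambda>(p, tau). (p, Suc tau)) (first_emptying (ns[k := ns ! k - 1]))))
        {(p, tau). p = i \<and> tau \<le> t}"
    unfolding F_def by (subst first_emptying.simps) (simp add: P ne')
  also have "\<dots> = (\<Sum>k<length ns. G ns i t k) / length ns"
  proof -
    have eq: "measure_pmf.prob (if ns ! k = 1 then return_pmf (k, 1)
        else map_pmf (\<lambda>(p, tau). (p, Suc tau)) (first_emptying (ns[k := ns ! k - 1])))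
        {(p, tau). p = i \<and> tau \<le> t} = G ns i t k" for k
    proof (cases "ns ! k = 1")
      case True then show ?thesis by (simp add: G_def)
    next
      case False
      show ?thesis
      proof (cases t)
        case 0
        have "(\<lambda>(p, tau). (p, Suc tau)) -` {(p, tau). p = i \<and> tau \<le> t} = {}"
          using 0 by auto
        then show ?thesis using False 0 by (simp add: G_def)
      next
        case (Suc t')
        have "(\<lambda>(p, tau). (p, Suc tau)) -` {(p, tau). p = i \<and> tau \<le> t} = {(p, tau). p = i \<and> tau \<le> t'}"
          using Suc by auto
        then show ?thesis using False Suc by (simp add: G_def F_def)
      qed
    qed
    show ?thesis
      by (subst prob_bind_pmf_of_set) (use ne' eq in auto)
  qed
  finally show ?thesis .
qed
lemma F_0:
  assumes pos: "\<forall>k<length ns. 0 < ns ! k" and ne: "ns \<noteq> []"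
  shows "F ns i 0 = 0"
proof -
  have "G ns i 0 k = 0" for k unfolding G_def by simp
  then show ?thesis using F_rec[OF pos ne, of i 0] by simp
qed

lemma F_nonneg: "0 \<le> F ns i t" by (simp add: F_def)
lemma F_le1: "F ns i t \<le> 1" by (simp add: F_def)

lemma F_perm:
  assumes bij: "bij_betw \<sigma> {..<length ns} {..<length ns}"
    and pos: "\<forall>k<length ns. 0 < ns ! k" and k: "k < length ns"
  shows "F (map (\<lambda>m. ns ! \<sigma> m) [0..<length ns]) k t = F ns (\<sigma> k) t"
  using bij pos k
proof (induction t arbitrary: ns)
  case 0
  have ne: "ns \<noteq> []" using 0 by auto
  have pos': "\<forall>m<length (map (\<lambda>m. ns ! \<sigma> m) [0..<length ns]). 0 < map (\<lambda>m. ns ! \<sigma> m) [0..<length ns] ! m"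
  proof -
    have "\<forall>m<length ns. \<sigma> m < length ns" using bij_betwE[OF 0(1)] by simp
    then show ?thesis using 0(2) by simp
  qed
  show ?case using F_0[OF pos'] F_0[OF 0(2) ne] ne by simp
next
  case (Suc t)
  define K where "K = length ns"
  define ns' where "ns' = map (\<lambda>m. ns ! \<sigma> m) [0..<K]"
  have ne: "ns \<noteq> []" using Suc by auto
  have sK: "\<And>m. m < K \<Longrightarrow> \<sigma> m < K" using bij_betwE[OF Suc.prems(1)] unfolding K_def by simp
  have inj: "inj_on \<sigma> {..<K}" using Suc.prems(1) unfolding K_def bij_betw_def by simp
  have len': "length ns' = K" by (simp add: ns'_def)
  have nth': "\<And>m. m < K \<Longrightarrow> ns' ! m = ns ! \<sigma> m" by (simp add: ns'_def)
  have pos': "\<forall>m<length ns'. 0 < ns' ! m"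
    using Suc.prems(2) sK nth' len' unfolding K_def by auto
  have ne': "ns' \<noteq> []" using len' ne K_def by auto
  have tmeq: "G ns' k (Suc t) m = G ns (\<sigma> k) (Suc t) (\<sigma> m)" if m: "m < K" for m
  proof (cases "ns ! \<sigma> m = 1")
    case True
    have "(m = k) = (\<sigma> m = \<sigma> k)" using inj_onD[OF inj, of m k] m Suc.prems(3) K_def by auto
    then show ?thesis using True nth'[OF m] by (simp add: G_def)
  next
    case False
    define x where "x = ns ! \<sigma> m - 1"
    have eql: "ns'[m := x] = map (\<lambda>m'. (ns[\<sigma> m := x]) ! \<sigma> m') [0..<length (ns[\<sigma> m := x])]"
    proof (rule nth_equalityI)
      show "length (ns'[m := x]) = length (map (\<lambda>m'. (ns[\<sigma> m := x]) ! \<sigma> m') [0..<length (ns[\<sigma> m := x])])"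
        by (simp add: len' K_def)
    next
      fix m' assume "m' < length (ns'[m := x])"
      then have m': "m' < K" by (simp add: len')
      have "(m' = m) = (\<sigma> m' = \<sigma> m)" using inj_onD[OF inj, of m' m] m m' by auto
      then show "ns'[m := x] ! m' = map (\<lambda>m'. (ns[\<sigma> m := x]) ! \<sigma> m') [0..<length (ns[\<sigma> m := x])] ! m'"
        using m' m sK[OF m'] sK[OF m] nth'[OF m'] len' K_def by (auto simp: nth_list_update)
    qed
    have posx: "\<forall>k<length (ns[\<sigma> m := x]). 0 < ns[\<sigma> m := x] ! k"
      using Suc.prems(2) False sK[OF m] K_def x_def by (auto simp: nth_list_update)
    have bijx: "bij_betw \<sigma> {..<length (ns[\<sigma> m := x])} {..<length (ns[\<sigma> m := x])}"
      using Suc.prems(1) by simp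
    have "F (ns'[m := x]) k t = F (ns[\<sigma> m := x]) (\<sigma> k) t"
      unfolding eql by (rule Suc.IH[OF bijx posx]) (use Suc.prems(3) in simp)
    then show ?thesis using False nth'[OF m] by (simp add: G_def x_def)
  qed
  have "F ns' k (Suc t) = (\<Sum>m<K. G ns' k (Suc t) m) / K"
    using F_rec[OF pos' ne'] len' by simp
  also have "\<dots> = (\<Sum>m<K. G ns (\<sigma> k) (Suc t) (\<sigma> m)) / K"
    using tmeq by simp
  also have "\<dots> = (\<Sum>m<K. G ns (\<sigma> k) (Suc t) m) / K"
    using sum.reindex_bij_betw[OF Suc.prems(1)[folded K_def], of "G ns (\<sigma> k) (Suc t)"] by simp
  also have "\<dots> = F ns (\<sigma> k) (Suc t)"
    using F_rec[OF Suc.prems(2) ne] K_def by simp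
  finally show ?case unfolding ns'_def K_def .
qed
lemma main:
  assumes "\<forall>k<length ns. 0 < ns ! k" "i < length ns" "j < length ns" "ns ! i \<le> ns ! j"
  shows "F ns j t \<le> F ns i t"
  using assms
proof (induction t arbitrary: ns)
  case 0
  then have ne: "ns \<noteq> []" by auto
  show ?case using F_0[OF 0(1) ne] by simp
next
  case (Suc t)
  define K where "K = length ns"
  have ne: "ns \<noteq> []" using Suc by auto
  have pos: "\<forall>k<K. 0 < ns ! k" and iK: "i < K" and jK: "j < K" using Suc.prems K_def by auto
  show ?case
  proof (cases "i = j")
    case True then show ?thesis by simp
  next
    case ij: False
    have split: "(\<Sum>k<K. g k) = g i + g j + (\<Sum>k\<in>{..<K} - {i} - {j}. g k)" for g :: "nat \<Rightarrow> real"
    proof -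
      have "(\<Sum>k<K. g k) = g i + (\<Sum>k\<in>{..<K} - {i}. g k)"
        using iK by (simp add: sum.remove)
      also have "(\<Sum>k\<in>{..<K} - {i}. g k) = g j + (\<Sum>k\<in>{..<K} - {i} - {j}. g k)"
        using jK ij by (subst sum.remove[of _ j]) auto
      finally show ?thesis by simp
    qed
    have rest: "(\<Sum>k\<in>{..<K} - {i} - {j}. G ns j (Suc t) k) \<le> (\<Sum>k\<in>{..<K} - {i} - {j}. G ns i (Suc t) k)"
    proof (rule sum_mono)
      fix k assume k: "k \<in> {..<K} - {i} - {j}"
      show "G ns j (Suc t) k \<le> G ns i (Suc t) k"
      proof (cases "ns ! k = 1")
        case True then show ?thesis using k by (simp add: G_def)
      next
        case False
        have "F (ns[k := ns ! k - 1]) j t \<le> F (ns[k := ns ! k - 1]) i t"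
          apply (rule Suc.IH)
          using pos False k iK jK Suc.prems(4) K_def by (auto simp: nth_list_update)
        then show ?thesis using False by (simp add: G_def)
      qed
    qed
    have pair: "G ns j (Suc t) i + G ns j (Suc t) j \<le> G ns i (Suc t) i + G ns i (Suc t) j"
    proof (cases "ns ! i = 1")
      case True
      have a: "G ns i (Suc t) i = 1" "G ns j (Suc t) i = 0" using True ij by (auto simp: G_def)
      have b: "G ns j (Suc t) j \<le> 1" "0 \<le> G ns i (Suc t) j"
        by (auto simp: G_def F_le1 F_nonneg)
      show ?thesis using a b by simp
    next
      case False
      have Fj: "ns ! j \<noteq> 1" using False Suc.prems(4) pos iK by (metis One_nat_def Suc_lessI le_antisym less_or_eq_imp_le)
      define A where "A = ns[i := ns ! i - 1]"
      define B where "B = ns[j := ns ! j - 1]"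
      have G4: "G ns j (Suc t) i = F A j t" "G ns i (Suc t) i = F A i t"
               "G ns j (Suc t) j = F B j t" "G ns i (Suc t) j = F B i t"
        using False Fj by (auto simp: G_def A_def B_def)
      have posA: "\<forall>k<length A. 0 < A ! k" using pos False K_def iK by (auto simp: A_def nth_list_update)
      have posB: "\<forall>k<length B. 0 < B ! k" using pos Fj K_def jK by (auto simp: B_def nth_list_update)
      have lA: "length A = K" and lB: "length B = K" by (auto simp: A_def B_def K_def)
      have IA: "F A j t \<le> F A i t"
        using Suc.IH[OF posA] iK jK lA ij Suc.prems(4) by (simp add: A_def nth_list_update)
      show ?thesis
      proof (cases "ns ! i < ns ! j")
        case True
        have IB: "F B j t \<le> F B i t"
          using Suc.IH[OF posB] iK jK lB ij True by (simp add: B_def nth_list_update)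
        show ?thesis using IA IB G4 by simp
      next
        case eq: False
        then have eqv: "ns ! i = ns ! j" using Suc.prems(4) by simp
        define \<sigma> where "\<sigma> = (\<lambda>m::nat. if m = i then j else if m = j then i else m)"
        have bij: "bij_betw \<sigma> {..<length A} {..<length A}"
          by (rule bij_betw_byWitness[where f'=\<sigma>]) (auto simp: \<sigma>_def lA iK jK)
        have Beq: "B = map (\<lambda>m. A ! \<sigma> m) [0..<length A]"
          by (rule nth_equalityI) (use lA lB iK jK ij eqv in \<open>auto simp: A_def B_def \<sigma>_def nth_list_update\<close>)
        have "F B i t = F A (\<sigma> i) t" unfolding Beq by (rule F_perm[OF bij posA]) (simp add: lA iK)
        moreover have "F B j t = F A (\<sigma> j) t" unfolding Beq by (rule F_perm[OF bij posA]) (simp add: lA jK)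
        ultimately have "F B i t = F A j t" "F B j t = F A i t" by (auto simp: \<sigma>_def)
        then show ?thesis using G4 by simp
      qed
    qed
    have "F ns j (Suc t) = (\<Sum>k<K. G ns j (Suc t) k) / K" using F_rec[OF Suc.prems(1) ne] K_def by simp
    also have "\<dots> \<le> (\<Sum>k<K. G ns i (Suc t) k) / K"
      by (rule divide_right_mono) (use split[of "G ns j (Suc t)"] split[of "G ns i (Suc t)"] rest pair in simp_all)
    also have "\<dots> = F ns i (Suc t)" using F_rec[OF Suc.prems(1) ne] K_def by simp
    finally show ?thesis .
  qed
qed

theorem lemma9:
  fixes ns :: "nat list" and i j t :: nat
  assumes "length ns \<ge> 2"
    and "\<forall>k < length ns. 0 < ns ! k"
    and "i < length ns" and "j < length ns"
    and "ns ! i < ns ! j"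
  shows "measure_pmf.prob (first_emptying ns) {(p, tau). p = i \<and> tau \<le> t}
           \<ge> measure_pmf.prob (first_emptying ns) {(p, tau). p = j \<and> tau \<le> t}"
  using main[OF assms(2,3,4), of t] assms(5) unfolding F_def by simp
end
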